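(* Let $k \ge 0$, let $G_i$ and $G_j$ be two node-labeled graphs with node coloring $l$, and let $F^{(k)}$ be a function assigning to each node $v \in V(G_i) \cup V(G_j)$ a vector $F^{(k)}(v) \in \mathbb{R}^{d}$ such that for all nodes $u, v \in V(G_i) \cup V(G_j)$, $c_l^{(k)}(u)=c_l^{(k)}(v) \Longleftrightarrow F^{(k)}(u) = F^{(k)}(v)$. Let $f_G$ be a function mapping countable multisets of elements of $\mathbb{R}^d$ to $\mathbb{R}^{d_G}$, and define $F^{(k)}_G(G) = f_G(\{\!\{F^{(k)}(v) \mid v \in V(G)\}\!\})$. Put $\mathcal{A}=\{\!\{F^{(k)}(v) \mid v \in V(G_i)\}\!\}$ and $\mathcal{B}=\{\!\{F^{(k)}(v) \mid v \in V(G_j)\}\!\}$. If $$f_G(\mathcal{A}) = f_G(\mathcal{B}) \Longrightarrow \mathcal{A} = \mathcal{B},$$ then $$F^{(k)}_G(G_i)=F^{(k)}_G(G_j) \Longleftrightarrow C_l^{(k)}(G_i) = C_l^{(k)}(G_j).$$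
   Context: A graph $G=(V,E)$ has a finite node set $V$ and edges $E \subseteq \{\{u,v\} \subseteq V\}$; the neighborhood of $v$ is $N(v)=\{u \in V \mid \{v,u\} \in E\}$. A node coloring (labeling) is a function $l$ from nodes to a set of colors. Multisets are written $\{\!\{\dots\}\!\}$. 1-WL coloring: set $c_l^{(0)} = l$ and for $t>0$, $c_l^{(t)}(v) = \mathrm{HASH}\big(c_l^{(t-1)}(v), \{\!\{c_l^{(t-1)}(u) \mid u \in N(v)\}\!\}\big)$, where $\mathrm{HASH}$ is an injective map sending each such pair to a value not used in earlier iterations (the same map is used for all graphs considered). For a graph $G$, $C_l^{(t)}(G) = \{\!\{c_l^{(t)}(v) \mid v \in V(G)\}\!\}$. *)

theory Defs
  imports "HOL-Analysis.Analysis" "HOL-Library.Multiset"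
begin

type_synonym 'v graph = "'v set \<times> 'v set set"

definition is_graph :: "'v graph \<Rightarrow> bool" where
  "is_graph G \<longleftrightarrow> finite (fst G) \<and> snd G \<subseteq> {{u, v} | u v. u \<in> fst G \<and> v \<in> fst G}"

definition nbhd :: "'v graph \<Rightarrow> 'v \<Rightarrow> 'v set" where
  "nbhd G v = {u \<in> fst G. {v, u} \<in> snd G}"

text \<open>The HASH function is realised by the
  injective constructor WL_Step; a colour produced in iteration t has nesting
  depth t, hence is never a value used in an earlier iteration.  The same map
  is used for all graphs.\<close>
datatype 'c wl_color = WL_Base 'c | WL_Step "'c wl_color" "'c wl_color multiset"

fun wl :: "'v graph \<Rightarrow> ('v \<Rightarrow> 'c) \<Rightarrow> nat \<Rightarrow> 'v \<Rightarrow> 'c wl_color" where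
  "wl G l 0 v = WL_Base (l v)"
| "wl G l (Suc t) v = WL_Step (wl G l t v) (image_mset (wl G l t) (mset_set (nbhd G v)))"

definition wl_multiset :: "'v graph \<Rightarrow> ('v \<Rightarrow> 'c) \<Rightarrow> nat \<Rightarrow> 'c wl_color multiset" where
  "wl_multiset G l t = image_mset (wl G l t) (mset_set (fst G))"

fun wl_union :: "'v graph \<Rightarrow> 'v graph \<Rightarrow> ('v + 'v \<Rightarrow> 'c) \<Rightarrow> nat \<Rightarrow> 'v + 'v \<Rightarrow> 'c wl_color" where
  "wl_union Gi Gj l t (Inl v) = wl Gi (l \<circ> Inl) t v"
| "wl_union Gi Gj l t (Inr v) = wl Gj (l \<circ> Inr) t v"

end

theory Submission
  imports Defs
begin

theorem proposition3p5:
  fixes Gi Gj :: "'v graph"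
    and l :: "'v + 'v \<Rightarrow> 'c"
    and k :: nat
    and F :: "'v + 'v \<Rightarrow> real ^ 'd"
    and fG :: "(real ^ 'd) multiset \<Rightarrow> real ^ 'e"
  assumes "is_graph Gi" and "is_graph Gj"
    and "\<forall>u \<in> Inl ` fst Gi \<union> Inr ` fst Gj. \<forall>v \<in> Inl ` fst Gi \<union> Inr ` fst Gj.
           wl_union Gi Gj l k u = wl_union Gi Gj l k v \<longleftrightarrow> F u = F v"
    and "fG {# F (Inl v). v \<in># mset_set (fst Gi) #} = fG {# F (Inr v). v \<in># mset_set (fst Gj) #}
         \<Longrightarrow> {# F (Inl v). v \<in># mset_set (fst Gi) #} = {# F (Inr v). v \<in># mset_set (fst Gj) #}"
  shows "fG {# F (Inl v). v \<in># mset_set (fst Gi) #} = fG {# F (Inr v). v \<in># mset_set (fst Gj) #}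
         \<longleftrightarrow> wl_multiset Gi (l \<circ> Inl) k = wl_multiset Gj (l \<circ> Inr) k"
proof -
  define c where "c = wl_union Gi Gj l k"
  define S where "S = Inl ` fst Gi \<union> Inr ` fst Gj"
  define g where "g x = F (SOME u. u \<in> S \<and> c u = x)" for x
  define h where "h y = c (SOME u. u \<in> S \<and> F u = y)" for y
  have cF: "\<And>u v. u \<in> S \<Longrightarrow> v \<in> S \<Longrightarrow> c u = c v \<longleftrightarrow> F u = F v"
    using assms(3) unfolding c_def S_def by blast
  have gF: "g (c u) = F u" if "u \<in> S" for u
  proof -
    have "\<exists>w. w \<in> S \<and> c w = c u" using that by blast
    then have "(SOME w. w \<in> S \<and> c w = c u) \<in> S \<and> c (SOME w. w \<in> S \<and> c w = c u) = c u"
      by (rule someI_ex)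
    then show ?thesis unfolding g_def using cF that by blast
  qed
  have hF: "h (F u) = c u" if "u \<in> S" for u
  proof -
    have "\<exists>w. w \<in> S \<and> F w = F u" using that by blast
    then have "(SOME w. w \<in> S \<and> F w = F u) \<in> S \<and> F (SOME w. w \<in> S \<and> F w = F u) = F u"
      by (rule someI_ex)
    then show ?thesis unfolding h_def using cF that by blast
  qed
  have fi: "finite (fst Gi)" and fj: "finite (fst Gj)" using assms(1,2) unfolding is_graph_def by auto
  define Ci where "Ci = wl_multiset Gi (l \<circ> Inl) k"
  define Cj where "Cj = wl_multiset Gj (l \<circ> Inr) k"
  define Ai where "Ai = {# F (Inl v). v \<in># mset_set (fst Gi) #}"
  define Aj where "Aj = {# F (Inr v). v \<in># mset_set (fst Gj) #}"
  have Ci': "Ci = {# c (Inl v). v \<in># mset_set (fst Gi) #}"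
    unfolding Ci_def wl_multiset_def c_def by simp
  have Cj': "Cj = {# c (Inr v). v \<in># mset_set (fst Gj) #}"
    unfolding Cj_def wl_multiset_def c_def by simp
  have 1: "Ai = image_mset g Ci" unfolding Ai_def Ci' multiset.map_comp
    by (rule image_mset_cong) (use fi gF S_def in auto)
  have 2: "Aj = image_mset g Cj" unfolding Aj_def Cj' multiset.map_comp
    by (rule image_mset_cong) (use fj gF S_def in auto)
  have 3: "Ci = image_mset h Ai" unfolding Ai_def Ci' multiset.map_comp
    by (rule image_mset_cong) (use fi hF S_def in auto)
  have 4: "Cj = image_mset h Aj" unfolding Aj_def Cj' multiset.map_comp
    by (rule image_mset_cong) (use fj hF S_def in auto)
  have "fG Ai = fG Aj \<longleftrightarrow> Ci = Cj"
    using 1 2 3 4 assms(4) unfolding Ai_def Aj_def by metis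
  then show ?thesis unfolding Ai_def Aj_def Ci_def Cj_def .
qed

end
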